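(* There is an absolute constant $C>0$ such that for every complex-valued $f\in L^2(-1,1)$ with compact support in $(-1,1)$, with $u$ the associated wave field defined in the context, $$\|f\|_{L^2(-1,1)}^2\le C\int_0^\infty \omega^2\big(|u(-1,\omega)|^2+|u(1,\omega)|^2\big)\,d\omega.$$
   Context: For a complex-valued $f\in L^2(-1,1)$ with compact support in $(-1,1)$ and a frequency $\omega>0$, the wave field is $$u(x,\omega)=\int_{-1}^1 \frac{i\,e^{i\omega|x-y|}}{2\omega}\,f(y)\,dy,\qquad x\in[-1,1].$$ This is the solution of the one-dimensional Helmholtz equation $u''+\omega^2u=f$ on $(-1,1)$ with the outgoing conditions $u'(-1,\omega)+i\omega u(-1,\omega)=0$ and $u'(1,\omega)-i\omega u(1,\omega)=0$. *)

theory Defs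
  imports "HOL-Analysis.Analysis"
begin

definition wave_field :: "(real \<Rightarrow> complex) \<Rightarrow> real \<Rightarrow> real \<Rightarrow> complex" where
  "wave_field f x \<omega> =
     (LINT y:{-1..1}|lborel.
        (\<i> * exp (\<i> * complex_of_real (\<omega> * \<bar>x - y\<bar>)) / complex_of_real (2 * \<omega>)) * f y)"

end

theory Submission
  imports Defs "HOL-Probability.Probability"
begin

definition gk :: "real \<Rightarrow> real \<Rightarrow> real" where
  "gk R t = 2 * pi * normal_density 0 (1/R) t"

definition wR :: "real \<Rightarrow> real \<Rightarrow> real" where
  "wR R w = exp (- ((w / R)^2) / 2)"

lemma gauss_ft:
  assumes R: "R > 0"
  shows "(LINT w|lborel. complex_of_real (wR R w) * iexp (w * t)) = complex_of_real (gk R t)"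
proof -
  have "char std_normal_distribution (R*t) = complex_of_real (exp (- ((R*t)^2) / 2))"
    by (simp add: char_std_normal_distribution)
  moreover have "char std_normal_distribution (R*t) =
      (LINT x|lborel. std_normal_density x *\<^sub>R iexp (R*t*x))"
    unfolding char_def by (subst integral_density) auto
  moreover have "(LINT w|lborel. complex_of_real (wR R w) * iexp (w * t)) =
      \<bar>R\<bar> *\<^sub>R (LINT x|lborel. complex_of_real (wR R (0 + R*x)) * iexp ((0 + R*x) * t))"
    by (rule lborel_integral_real_affine) (use R in auto)
  moreover have "\<And>x. complex_of_real (wR R (0 + R*x)) * iexp ((0 + R*x) * t)
      = complex_of_real (sqrt (2*pi)) * (std_normal_density x *\<^sub>R iexp (R*t*x))"
    using R by (simp add: wR_def std_normal_density_def scaleR_conv_of_real mult_ac)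
  ultimately have "(LINT w|lborel. complex_of_real (wR R w) * iexp (w * t)) =
     complex_of_real (R * sqrt (2*pi) * exp (- ((R*t)^2) / 2))"
    using R by (simp add: scaleR_conv_of_real)
  also have "R * sqrt (2*pi) * exp (- ((R*t)^2) / 2) = gk R t"
    using R unfolding gk_def normal_density_def
    by (simp add: real_sqrt_mult power_divide field_simps real_sqrt_divide)
  finally show ?thesis .
qed


lemma cnj_meas[measurable]:
  "f \<in> borel_measurable M \<Longrightarrow> (\<lambda>x. cnj (f x)) \<in> borel_measurable M"
  by (rule borel_measurable_continuous_on[where f=cnj]) (auto intro!: continuous_intros)

lemma iexp_meas[measurable]:
  "g \<in> borel_measurable M \<Longrightarrow> (\<lambda>x. iexp (g x)) \<in> borel_measurable M"
  by (rule borel_measurable_continuous_on[where f=iexp]) (auto intro!: continuous_intros)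

definition FT :: "(real \<Rightarrow> complex) \<Rightarrow> real \<Rightarrow> complex" where
  "FT k w = (LINT y|lborel. iexp (w * y) * k y)"

lemma wR_eq: "R > 0 \<Longrightarrow> wR R w = sqrt (2*pi*R^2) * normal_density 0 R w"
  unfolding wR_def normal_density_def by (simp add: power_divide)

lemma wR_integrable: "R > 0 \<Longrightarrow> integrable lborel (wR R)"
proof -
  assume R: "R > 0"
  have "wR R = (\<lambda>w. sqrt (2*pi*R^2) * normal_density 0 R w)"
    using wR_eq[OF R] by auto
  then show ?thesis using R by simp
qed

lemma wR_nonneg: "wR R w \<ge> 0" and wR_le1: "wR R w \<le> 1"
  unfolding wR_def by auto

lemma wR_meas[measurable]: "wR R \<in> borel_measurable borel"
  unfolding wR_def by measurable

lemma FT_meas[measurable]: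
  assumes [measurable]: "k \<in> borel_measurable borel"
  shows "FT k \<in> borel_measurable borel"
  unfolding FT_def[abs_def] by measurable

lemma FT_bound:
  assumes k: "integrable lborel k"
  shows "cmod (FT k w) \<le> (LINT y|lborel. cmod (k y))"
  unfolding FT_def
  using integral_norm_bound[of lborel "\<lambda>y. iexp (w * y) * k y"]
  by (simp add: norm_mult)

lemma prod_bound_integrable:
  fixes f :: "real \<times> real \<Rightarrow> complex"
  assumes f[measurable]: "f \<in> borel_measurable (lborel \<Otimes>\<^sub>M lborel)"
    and p: "integrable lborel p" and q: "integrable lborel q"
    and pn: "\<And>a. p a \<ge> 0" and qn: "\<And>b. q b \<ge> 0"
    and b: "\<And>a b. norm (f (a,b)) \<le> p a * q b"
  shows "integrable (lborel \<Otimes>\<^sub>M lborel) f"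
proof (rule lborel_pair.Fubini_integrable[OF f])
  have pm[measurable]: "p \<in> borel_measurable borel" using p by auto
  have qm[measurable]: "q \<in> borel_measurable borel" using q by auto
  show "AE x in lborel. integrable lborel (\<lambda>y. f (x, y))"
  proof (rule AE_I2)
    fix x
    show "integrable lborel (\<lambda>y. f (x, y))"
      by (rule Bochner_Integration.integrable_bound[where f="\<lambda>y. p x * q y"])
         (auto intro!: integrable_mult_right q AE_I2 order_trans[OF b])
  qed
  show "integrable lborel (\<lambda>x. LINT y|lborel. norm (f (x, y)))"
  proof (rule Bochner_Integration.integrable_bound[where f="\<lambda>x. p x * (LINT y|lborel. q y)"])
    show "integrable lborel (\<lambda>x. p x * (LINT y|lborel. q y))"
      using p by auto
    show "(\<lambda>x. LINT y|lborel. norm (f (x, y))) \<in> borel_measurable lborel"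
      by measurable
    show "AE x in lborel. norm (LINT y|lborel. norm (f (x, y))) \<le> norm (p x * (LINT y|lborel. q y))"
    proof (rule AE_I2)
      fix x
      have i: "integrable lborel (\<lambda>y. f (x, y))"
        by (rule Bochner_Integration.integrable_bound[where f="\<lambda>y. p x * q y"])
           (auto intro!: integrable_mult_right q AE_I2 order_trans[OF b])
      have "(LINT y|lborel. norm (f (x, y))) \<le> (LINT y|lborel. p x * q y)"
        by (rule integral_mono) (use i q b in auto)
      also have "\<dots> = p x * (LINT y|lborel. q y)" by simp
      finally show "norm (LINT y|lborel. norm (f (x, y))) \<le> norm (p x * (LINT y|lborel. q y))"
        using pn[of x] qn by (auto intro!: integral_nonneg mult_nonneg_nonneg)
    qed
  qed
qed


lemma iexp_cnj_mult: "iexp a * cnj (iexp b) = iexp (a - b)"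
proof -
  have "cnj (iexp b) = iexp (- b)" by (simp add: exp_cnj)
  then show ?thesis by (simp add: exp_add[symmetric] algebra_simps)
qed

lemma fubini_id:
  fixes k :: "real \<Rightarrow> complex"
  assumes k: "integrable lborel k" and R: "R > 0"
  shows "complex_of_real (LINT w|lborel. wR R w * (cmod (FT k w))\<^sup>2) =
    (LINT x|lborel. LINT y|lborel. k x * cnj (k y) * complex_of_real (gk R (x - y)))"
proof -
  have km[measurable]: "k \<in> borel_measurable borel" using k by auto
  define L where "L = (LINT y|lborel. cmod (k y))"
  have L0: "L \<ge> 0" unfolding L_def by auto
  have kn: "integrable lborel (\<lambda>y. cmod (k y))" using k by auto
  define \<Phi> where "\<Phi> w x y = complex_of_real (wR R w) * (k x * cnj (k y)) * iexp (w * (x - y))" for w x y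
  have \<Phi>n: "norm (\<Phi> w x y) = wR R w * cmod (k x) * cmod (k y)" for w x y
    unfolding \<Phi>_def using wR_nonneg[of R w] by (simp add: norm_mult)
  have A: "complex_of_real (wR R w * (cmod (FT k w))\<^sup>2) = (LINT x|lborel. LINT y|lborel. \<Phi> w x y)" for w
  proof -
    have "complex_of_real (wR R w * (cmod (FT k w))\<^sup>2) =
        complex_of_real (wR R w) * (FT k w * cnj (FT k w))"
      using complex_norm_square[of "FT k w"] by (simp del: of_real_power)
    also have "FT k w * cnj (FT k w) = (LINT x|lborel. iexp (w * x) * k x * cnj (FT k w))"
      unfolding FT_def[of k w] by (rule integral_mult_left_zero[symmetric])
    also have "\<dots> = (LINT x|lborel. LINT y|lborel. iexp (w * x) * k x * cnj (iexp (w * y) * k y))"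
    proof -
      have c: "cnj (FT k w) = (LINT y|lborel. cnj (iexp (w * y) * k y))"
        unfolding FT_def by (rule Bochner_Integration.integral_cnj[symmetric])
      show ?thesis unfolding c
        by (rule Bochner_Integration.integral_cong[OF refl], rule integral_mult_right_zero[symmetric])
    qed
    also have "complex_of_real (wR R w) * \<dots> =
        (LINT x|lborel. complex_of_real (wR R w) * (LINT y|lborel. iexp (w * x) * k x * cnj (iexp (w * y) * k y)))"
      by (rule integral_mult_right_zero[symmetric])
    also have "\<dots> = (LINT x|lborel. LINT y|lborel. \<Phi> w x y)"
    proof (rule Bochner_Integration.integral_cong[OF refl])
      fix x
      have "complex_of_real (wR R w) * (LINT y|lborel. iexp (w * x) * k x * cnj (iexp (w * y) * k y))
         = (LINT y|lborel. complex_of_real (wR R w) * (iexp (w * x) * k x * cnj (iexp (w * y) * k y)))"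
        by (rule integral_mult_right_zero[symmetric])
      also have "\<dots> = (LINT y|lborel. \<Phi> w x y)"
      proof (rule Bochner_Integration.integral_cong[OF refl])
        fix y
        have "iexp (w * x) * cnj (iexp (w * y)) = iexp (w * (x - y))"
          using iexp_cnj_mult[of "w*x" "w*y"] by (simp add: algebra_simps)
        then show "complex_of_real (wR R w) * (iexp (w * x) * k x * cnj (iexp (w * y) * k y)) = \<Phi> w x y"
        proof -
          have "complex_of_real (wR R w) * (iexp (w * x) * k x * cnj (iexp (w * y) * k y)) =
              complex_of_real (wR R w) * (k x * cnj (k y)) * (iexp (w * x) * cnj (iexp (w * y)))"
            by (simp only: complex_cnj_mult mult_ac)
          with \<open>iexp (w * x) * cnj (iexp (w * y)) = iexp (w * (x - y))\<close> show ?thesis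
            unfolding \<Phi>_def by simp
        qed
      qed
      finally show "complex_of_real (wR R w) * (LINT y|lborel. iexp (w * x) * k x * cnj (iexp (w * y) * k y))
         = (LINT y|lborel. \<Phi> w x y)" .
    qed
    finally show ?thesis .
  qed
  have "complex_of_real (LINT w|lborel. wR R w * (cmod (FT k w))\<^sup>2) =
      (LINT w|lborel. complex_of_real (wR R w * (cmod (FT k w))\<^sup>2))"
    by (rule integral_complex_of_real[symmetric])
  also have "\<dots> = (LINT w|lborel. LINT x|lborel. LINT y|lborel. \<Phi> w x y)"
    using A by simp
  also have "\<dots> = (LINT x|lborel. LINT w|lborel. LINT y|lborel. \<Phi> w x y)"
  proof (rule lborel_pair.Fubini_integral[symmetric])
    show "integrable (lborel \<Otimes>\<^sub>M lborel) (\<lambda>(w, x). LINT y|lborel. \<Phi> w x y)"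
    proof (rule prod_bound_integrable)
      show "(\<lambda>(w, x). LINT y|lborel. \<Phi> w x y) \<in> borel_measurable (lborel \<Otimes>\<^sub>M lborel)"
        unfolding \<Phi>_def by measurable
      show "integrable lborel (wR R)" using wR_integrable[OF R] .
      show "integrable lborel (\<lambda>x. cmod (k x) * L)" using kn by auto
      show "0 \<le> wR R a" for a by (rule wR_nonneg)
      show "0 \<le> cmod (k b) * L" for b using L0 by simp
      fix a b
      have "norm (LINT y|lborel. \<Phi> a b y) \<le> (LINT y|lborel. norm (\<Phi> a b y))"
        by (rule integral_norm_bound)
      also have "\<dots> = (LINT y|lborel. wR R a * cmod (k b) * cmod (k y))"
        by (simp add: \<Phi>n)
      also have "\<dots> = wR R a * (cmod (k b) * L)"
        unfolding L_def by (simp add: mult.assoc)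
      finally show "norm ((\<lambda>(w, x). LINT y|lborel. \<Phi> w x y) (a, b)) \<le> wR R a * (cmod (k b) * L)"
        by simp
    qed
  qed
  also have "\<dots> = (LINT x|lborel. LINT y|lborel. k x * cnj (k y) * complex_of_real (gk R (x - y)))"
  proof (rule Bochner_Integration.integral_cong[OF refl])
    fix x
    have "(LINT w|lborel. LINT y|lborel. \<Phi> w x y) = (LINT y|lborel. LINT w|lborel. \<Phi> w x y)"
    proof (rule lborel_pair.Fubini_integral[symmetric])
      show "integrable (lborel \<Otimes>\<^sub>M lborel) (\<lambda>(w, y). \<Phi> w x y)"
      proof (rule prod_bound_integrable)
        show "(\<lambda>(w, y). \<Phi> w x y) \<in> borel_measurable (lborel \<Otimes>\<^sub>M lborel)"
          unfolding \<Phi>_def by measurable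
        show "integrable lborel (wR R)" using wR_integrable[OF R] .
        show "integrable lborel (\<lambda>y. cmod (k x) * cmod (k y))" using kn by auto
        show "0 \<le> wR R a" for a by (rule wR_nonneg)
        show "0 \<le> cmod (k x) * cmod (k b)" for b by simp
        show "norm ((\<lambda>(w, y). \<Phi> w x y) (a, b)) \<le> wR R a * (cmod (k x) * cmod (k b))" for a b
          by (simp add: \<Phi>n mult.assoc)
      qed
    qed
    also have "\<dots> = (LINT y|lborel. k x * cnj (k y) * complex_of_real (gk R (x - y)))"
    proof (rule Bochner_Integration.integral_cong[OF refl])
      fix y
      have "(LINT w|lborel. \<Phi> w x y) = (LINT w|lborel. (k x * cnj (k y)) * (complex_of_real (wR R w) * iexp (w * (x - y))))"
        unfolding \<Phi>_def by (simp add: mult_ac)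
      also have "\<dots> = (k x * cnj (k y)) * (LINT w|lborel. complex_of_real (wR R w) * iexp (w * (x - y)))"
        by (rule integral_mult_right_zero)
      also have "\<dots> = k x * cnj (k y) * complex_of_real (gk R (x - y))"
        using gauss_ft[OF R, of "x - y"] by simp
      finally show "(LINT w|lborel. \<Phi> w x y) = k x * cnj (k y) * complex_of_real (gk R (x - y))" .
    qed
    finally show "(LINT w|lborel. LINT y|lborel. \<Phi> w x y) = (LINT y|lborel. k x * cnj (k y) * complex_of_real (gk R (x - y)))" .
  qed
  finally show ?thesis .
qed


lemma norm_integral_le_nn:
  fixes f :: "'a \<Rightarrow> 'b::{banach, second_countable_topology}"
  shows "ennreal (norm (integral\<^sup>L M f)) \<le> (\<integral>\<^sup>+x. norm (f x) \<partial>M)"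
proof (cases "integrable M f")
  case True then show ?thesis by (rule integral_norm_bound_ennreal)
next
  case False then show ?thesis by (simp add: not_integrable_integral_eq)
qed

lemma gk_nonneg: "gk R t \<ge> 0"
  unfolding gk_def by simp

lemma gk_meas[measurable]: "(\<lambda>p. gk R (f p)) \<in> borel_measurable M" if [measurable]: "f \<in> borel_measurable M"
  unfolding gk_def by measurable

lemma gk_shift: "gk R (x - y) = 2 * pi * normal_density x (1/R) y"
  unfolding gk_def normal_density_def by (simp add: power2_commute)

lemma gk_shift': "gk R (x - y) = 2 * pi * normal_density y (1/R) x"
  unfolding gk_def normal_density_def by simp

lemma nd_nn: "R > 0 \<Longrightarrow> (\<integral>\<^sup>+ y. ennreal (normal_density m (1/R) y) \<partial>lborel) = 1"
  by (subst nn_integral_eq_integral) auto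

lemma gk_nn1: "R > 0 \<Longrightarrow> (\<integral>\<^sup>+ y. ennreal (gk R (x - y)) \<partial>lborel) = ennreal (2*pi)"
  unfolding gk_shift
  by (simp add: ennreal_mult nn_integral_cmult nd_nn)

lemma gk_nn2: "R > 0 \<Longrightarrow> (\<integral>\<^sup>+ x. ennreal (gk R (x - y)) \<partial>lborel) = ennreal (2*pi)"
  unfolding gk_shift'
  by (simp add: ennreal_mult nn_integral_cmult nd_nn)

lemma schur:
  fixes k :: "real \<Rightarrow> complex"
  assumes km[measurable]: "k \<in> borel_measurable borel" and R: "R > 0"
  shows "ennreal (cmod (LINT x|lborel. LINT y|lborel. k x * cnj (k y) * complex_of_real (gk R (x - y))))
     \<le> ennreal (2*pi) * (\<integral>\<^sup>+ x. ennreal ((cmod (k x))\<^sup>2) \<partial>lborel)"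
proof -
  let ?N = "\<integral>\<^sup>+ x. ennreal ((cmod (k x))\<^sup>2) \<partial>lborel"
  have "ennreal (cmod (LINT x|lborel. LINT y|lborel. k x * cnj (k y) * complex_of_real (gk R (x - y))))
     \<le> (\<integral>\<^sup>+x. norm (LINT y|lborel. k x * cnj (k y) * complex_of_real (gk R (x - y))) \<partial>lborel)"
    by (rule norm_integral_le_nn)
  also have "\<dots> \<le> (\<integral>\<^sup>+x. \<integral>\<^sup>+y. ennreal (cmod (k x) * cmod (k y) * gk R (x - y)) \<partial>lborel \<partial>lborel)"
  proof (rule nn_integral_mono)
    fix x
    have "ennreal (norm (LINT y|lborel. k x * cnj (k y) * complex_of_real (gk R (x - y))))
        \<le> (\<integral>\<^sup>+y. norm (k x * cnj (k y) * complex_of_real (gk R (x - y))) \<partial>lborel)"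
      by (rule norm_integral_le_nn)
    also have "\<dots> = (\<integral>\<^sup>+y. ennreal (cmod (k x) * cmod (k y) * gk R (x - y)) \<partial>lborel)"
      by (simp add: norm_mult gk_nonneg)
    finally show "ennreal (norm (LINT y|lborel. k x * cnj (k y) * complex_of_real (gk R (x - y))))
        \<le> (\<integral>\<^sup>+y. ennreal (cmod (k x) * cmod (k y) * gk R (x - y)) \<partial>lborel)" .
  qed
  also have "\<dots> \<le> (\<integral>\<^sup>+x. \<integral>\<^sup>+y. ennreal ((cmod (k x))\<^sup>2 / 2 * gk R (x - y))
       + ennreal ((cmod (k y))\<^sup>2 / 2 * gk R (x - y)) \<partial>lborel \<partial>lborel)"
  proof (intro nn_integral_mono)
    fix x y
    have "cmod (k x) * cmod (k y) \<le> (cmod (k x))\<^sup>2 / 2 + (cmod (k y))\<^sup>2 / 2"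
      using sum_squares_bound[of "cmod (k x)" "cmod (k y)"] by (simp add: power2_eq_square)
    then have "cmod (k x) * cmod (k y) * gk R (x - y) \<le> ((cmod (k x))\<^sup>2 / 2 + (cmod (k y))\<^sup>2 / 2) * gk R (x - y)"
      by (rule mult_right_mono) (rule gk_nonneg)
    then show "ennreal (cmod (k x) * cmod (k y) * gk R (x - y)) \<le> ennreal ((cmod (k x))\<^sup>2 / 2 * gk R (x - y))
       + ennreal ((cmod (k y))\<^sup>2 / 2 * gk R (x - y))"
      by (simp add: ennreal_plus[symmetric] gk_nonneg distrib_right del: ennreal_plus)
  qed
  also have "\<dots> = (\<integral>\<^sup>+x. \<integral>\<^sup>+y. ennreal ((cmod (k x))\<^sup>2 / 2 * gk R (x - y)) \<partial>lborel \<partial>lborel)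
     + (\<integral>\<^sup>+x. \<integral>\<^sup>+y. ennreal ((cmod (k y))\<^sup>2 / 2 * gk R (x - y)) \<partial>lborel \<partial>lborel)"
    by (simp add: nn_integral_add)
  also have "(\<integral>\<^sup>+x. \<integral>\<^sup>+y. ennreal ((cmod (k x))\<^sup>2 / 2 * gk R (x - y)) \<partial>lborel \<partial>lborel)
      = ennreal pi * ?N"
  proof -
    have "(\<integral>\<^sup>+x. \<integral>\<^sup>+y. ennreal ((cmod (k x))\<^sup>2 / 2 * gk R (x - y)) \<partial>lborel \<partial>lborel)
        = (\<integral>\<^sup>+x. ennreal ((cmod (k x))\<^sup>2 / 2) * \<integral>\<^sup>+y. ennreal (gk R (x - y)) \<partial>lborel \<partial>lborel)"
      apply (rule nn_integral_cong)
      apply (subst nn_integral_cmult[symmetric])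
       apply measurable
      apply (rule nn_integral_cong)
      apply (subst ennreal_mult[symmetric])
        apply (auto simp: gk_nonneg mult_ac)
      done
    also have "\<dots> = (\<integral>\<^sup>+x. ennreal pi * ennreal ((cmod (k x))\<^sup>2) \<partial>lborel)"
      by (simp add: gk_nn1[OF R] ennreal_mult[symmetric] mult_ac)
    also have "\<dots> = ennreal pi * ?N"
      by (simp add: nn_integral_cmult)
    finally show ?thesis .
  qed
  also have "(\<integral>\<^sup>+x. \<integral>\<^sup>+y. ennreal ((cmod (k y))\<^sup>2 / 2 * gk R (x - y)) \<partial>lborel \<partial>lborel)
      = ennreal pi * ?N"
  proof -
    have "(\<integral>\<^sup>+x. \<integral>\<^sup>+y. ennreal ((cmod (k y))\<^sup>2 / 2 * gk R (x - y)) \<partial>lborel \<partial>lborel)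
       = (\<integral>\<^sup>+y. \<integral>\<^sup>+x. ennreal ((cmod (k y))\<^sup>2 / 2 * gk R (x - y)) \<partial>lborel \<partial>lborel)"
      by (rule lborel_pair.Fubini'[symmetric]) measurable
    also have "\<dots> = (\<integral>\<^sup>+y. ennreal ((cmod (k y))\<^sup>2 / 2) * \<integral>\<^sup>+x. ennreal (gk R (x - y)) \<partial>lborel \<partial>lborel)"
      apply (rule nn_integral_cong)
      apply (subst nn_integral_cmult[symmetric])
       apply measurable
      apply (rule nn_integral_cong)
      apply (subst ennreal_mult[symmetric])
        apply (auto simp: gk_nonneg mult_ac)
      done
    also have "\<dots> = (\<integral>\<^sup>+y. ennreal pi * ennreal ((cmod (k y))\<^sup>2) \<partial>lborel)"
      by (simp add: gk_nn2[OF R] ennreal_mult[symmetric] mult_ac)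
    also have "\<dots> = ennreal pi * ?N"
      by (simp add: nn_integral_cmult)
    finally show ?thesis .
  qed
  also have "ennreal pi * ?N + ennreal pi * ?N = ennreal (2*pi) * ?N"
    by (simp add: distrib_right[symmetric] ennreal_plus[symmetric] del: ennreal_plus)
  finally show ?thesis .
qed


lemma gk_scaled: "R > 0 \<Longrightarrow> gk R (x - (x + 1 / R * s)) = 2 * pi * R * std_normal_density s"
  unfolding gk_def normal_density_def
  by (simp add: real_sqrt_mult real_sqrt_divide power_divide field_simps)

lemma gk_scaled2: "R > 0 \<Longrightarrow> gk R (- (s / R)) = 2 * pi * R * std_normal_density s"
  using gk_scaled[of R 0 s] by simp

lemma inner_sub:
  fixes h :: "real \<Rightarrow> complex"
  assumes R: "R > 0"
  shows "(LINT y|lborel. cnj (h y) * complex_of_real (gk R (x - y))) =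
     complex_of_real (2 * pi) * (LINT s|lborel. complex_of_real (std_normal_density s) * cnj (h (x + 1 / R * s)))"
proof -
  have "(LINT y|lborel. cnj (h y) * complex_of_real (gk R (x - y))) =
     \<bar>1/R\<bar> *\<^sub>R (LINT s|lborel. cnj (h (x + 1/R * s)) * complex_of_real (gk R (x - (x + 1/R * s))))"
    by (rule lborel_integral_real_affine) (use R in auto)
  also have "\<dots> = \<bar>1/R\<bar> *\<^sub>R (LINT s|lborel. complex_of_real (2 * pi * R) * (complex_of_real (std_normal_density s) * cnj (h (x + 1/R * s))))"
    by (rule arg_cong[where f="scaleR \<bar>1/R\<bar>"], rule Bochner_Integration.integral_cong[OF refl])
       (use R in \<open>simp add: gk_scaled2 mult_ac\<close>)
  also have "\<dots> = \<bar>1/R\<bar> *\<^sub>R (complex_of_real (2 * pi * R) * (LINT s|lborel. complex_of_real (std_normal_density s) * cnj (h (x + 1/R * s))))"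
    by (subst integral_mult_right_zero) (rule refl)
  also have "\<dots> = complex_of_real (2 * pi) * (LINT s|lborel. complex_of_real (std_normal_density s) * cnj (h (x + 1 / R * s)))"
    using R by (simp add: scaleR_conv_of_real)
  finally show ?thesis .
qed

lemma approx_id:
  fixes h :: "real \<Rightarrow> complex"
  assumes hc: "continuous_on UNIV h" and hb: "\<And>x. cmod (h x) \<le> B"
    and hs: "\<And>x. L < \<bar>x\<bar> \<Longrightarrow> h x = 0"
  shows "(\<lambda>n. LINT x|lborel. LINT y|lborel. h x * cnj (h y) * complex_of_real (gk (real (Suc n)) (x - y)))
     \<longlonglongrightarrow> complex_of_real (2 * pi * (LINT x|lborel. (cmod (h x))\<^sup>2))"
proof -
  have B0: "B \<ge> 0" using hb[of 0] norm_ge_zero order_trans by blast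
  have bnd: "std_normal_density s * cmod (h y) \<le> \<bar>B * std_normal_density s\<bar>" for s y
    using hb[of y] B0 by (simp add: abs_mult mult_right_mono mult.commute)
  have bnd': "std_normal_density s * cmod (h y) \<le> B * std_normal_density s" for s y
    using hb[of y] B0 by (simp add: mult_right_mono mult.commute)
  have hm[measurable]: "h \<in> borel_measurable borel"
    using hc by (rule borel_measurable_continuous_onI)
  define \<psi> where "\<psi> n x = (LINT s|lborel. complex_of_real (std_normal_density s) * cnj (h (x + 1 / real (Suc n) * s)))" for n x
  have \<psi>m[measurable]: "\<psi> n \<in> borel_measurable borel" for n
    unfolding \<psi>_def by measurable
  have stdint: "integrable lborel (\<lambda>s. B * std_normal_density s)"
    by auto
  have \<psi>int: "integrable lborel (\<lambda>s. complex_of_real (std_normal_density s) * cnj (h (x + 1 / real (Suc n) * s)))" for n x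
    by (rule Bochner_Integration.integrable_bound[OF stdint])
       (auto intro!: AE_I2 simp: norm_mult bnd)
  have \<psi>b: "cmod (\<psi> n x) \<le> B" for n x
  proof -
    have "cmod (\<psi> n x) \<le> (LINT s|lborel. norm (complex_of_real (std_normal_density s) * cnj (h (x + 1 / real (Suc n) * s))))"
      unfolding \<psi>_def by (rule integral_norm_bound)
    also have "\<dots> \<le> (LINT s|lborel. B * std_normal_density s)"
    proof (rule integral_mono)
      show "integrable lborel (\<lambda>s. norm (complex_of_real (std_normal_density s) * cnj (h (x + 1 / real (Suc n) * s))))"
        using \<psi>int[of x n] by (rule integrable_norm)
      show "integrable lborel (\<lambda>s. B * std_normal_density s)" by (rule stdint)
      fix s show "norm (complex_of_real (std_normal_density s) * cnj (h (x + 1 / real (Suc n) * s))) \<le> B * std_normal_density s"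
        using bnd'[of s] by (simp add: norm_mult)
    qed
    also have "\<dots> = B" by simp
    finally show ?thesis .
  qed
  have \<psi>lim: "(\<lambda>n. \<psi> n x) \<longlonglongrightarrow> cnj (h x)" for x
  proof -
    have "(\<lambda>n. \<psi> n x) \<longlonglongrightarrow> (LINT s|lborel. complex_of_real (std_normal_density s) * cnj (h x))"
      unfolding \<psi>_def
    proof (rule integral_dominated_convergence[where w="\<lambda>s. B * std_normal_density s"])
      show "(\<lambda>s. complex_of_real (std_normal_density s) * cnj (h x)) \<in> borel_measurable lborel" by measurable
      show "(\<lambda>s. complex_of_real (std_normal_density s) * cnj (h (x + 1 / real (Suc i) * s))) \<in> borel_measurable lborel" for i
        by measurable
      show "integrable lborel (\<lambda>s. B * std_normal_density s)" by (rule stdint)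
      show "AE s in lborel. norm (complex_of_real (std_normal_density s) * cnj (h (x + 1 / real (Suc i) * s))) \<le> B * std_normal_density s" for i
        using bnd' by (auto intro!: AE_I2 simp: norm_mult)
      show "AE s in lborel. (\<lambda>i. complex_of_real (std_normal_density s) * cnj (h (x + 1 / real (Suc i) * s))) \<longlonglongrightarrow> complex_of_real (std_normal_density s) * cnj (h x)"
      proof (rule AE_I2)
        fix s
        have "(\<lambda>i. x + 1 / real (Suc i) * s) \<longlonglongrightarrow> x + 0 * s"
          by (intro tendsto_intros LIMSEQ_inverse_real_of_nat[unfolded inverse_eq_divide])
        then have "(\<lambda>i. h (x + 1 / real (Suc i) * s)) \<longlonglongrightarrow> h x"
          using hc by (auto intro: continuous_on_tendsto_compose[where s=UNIV])
        then show "(\<lambda>i. complex_of_real (std_normal_density s) * cnj (h (x + 1 / real (Suc i) * s))) \<longlonglongrightarrow> complex_of_real (std_normal_density s) * cnj (h x)"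
          by (intro tendsto_intros)
      qed
    qed
    also have "(LINT s|lborel. complex_of_real (std_normal_density s) * cnj (h x)) = cnj (h x)"
      by simp
    finally show ?thesis .
  qed
  have eq: "(LINT x|lborel. LINT y|lborel. h x * cnj (h y) * complex_of_real (gk (real (Suc n)) (x - y)))
      = (LINT x|lborel. complex_of_real (2*pi) * (h x * \<psi> n x))" for n
  proof (rule Bochner_Integration.integral_cong[OF refl])
    fix x
    have "(LINT y|lborel. h x * cnj (h y) * complex_of_real (gk (real (Suc n)) (x - y)))
       = h x * (LINT y|lborel. cnj (h y) * complex_of_real (gk (real (Suc n)) (x - y)))"
      by (simp add: mult.assoc)
    also have "\<dots> = complex_of_real (2*pi) * (h x * \<psi> n x)"
      using inner_sub[where R="real (Suc n)" and x=x and h=h] unfolding \<psi>_def by simp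
    finally show "(LINT y|lborel. h x * cnj (h y) * complex_of_real (gk (real (Suc n)) (x - y)))
       = complex_of_real (2*pi) * (h x * \<psi> n x)" .
  qed
  have "(\<lambda>n. LINT x|lborel. complex_of_real (2*pi) * (h x * \<psi> n x)) \<longlonglongrightarrow>
      (LINT x|lborel. complex_of_real (2*pi) * (h x * cnj (h x)))"
  proof (rule integral_dominated_convergence[where w="\<lambda>x. 2 * pi * B * B * indicator {-L..L} x"])
    show "(\<lambda>x. complex_of_real (2*pi) * (h x * cnj (h x))) \<in> borel_measurable lborel" by measurable
    show "(\<lambda>x. complex_of_real (2*pi) * (h x * \<psi> i x)) \<in> borel_measurable lborel" for i by measurable
    show "integrable lborel (\<lambda>x. 2 * pi * B * B * indicator {-L..L} x)"
      by (intro integrable_mult_right) (simp add: integrable_indicator_iff emeasure_lborel_Icc_eq)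
    show "AE x in lborel. norm (complex_of_real (2*pi) * (h x * \<psi> i x)) \<le> 2 * pi * B * B * indicator {-L..L} x" for i
    proof (rule AE_I2)
      fix x
      show "norm (complex_of_real (2*pi) * (h x * \<psi> i x)) \<le> 2 * pi * B * B * indicator {-L..L} x"
      proof (cases "x \<in> {-L..L}")
        case True
        have "cmod (h x) * cmod (\<psi> i x) \<le> B * B"
          using hb[of x] \<psi>b[of i x] B0 by (intro mult_mono) auto
        then show ?thesis using True by (simp add: norm_mult)
      next
        case False
        then have "L < \<bar>x\<bar>" by auto
        then show ?thesis using hs[of x] False by simp
      qed
    qed
    show "AE x in lborel. (\<lambda>i. complex_of_real (2*pi) * (h x * \<psi> i x)) \<longlonglongrightarrow> complex_of_real (2*pi) * (h x * cnj (h x))"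
      by (intro AE_I2 tendsto_intros \<psi>lim)
  qed
  also have "(LINT x|lborel. complex_of_real (2*pi) * (h x * cnj (h x))) =
     complex_of_real (2 * pi * (LINT x|lborel. (cmod (h x))\<^sup>2))"
  proof -
    have "(LINT x|lborel. complex_of_real (2*pi) * (h x * cnj (h x))) =
        (LINT x|lborel. complex_of_real (2*pi * (cmod (h x))\<^sup>2))"
      by (rule Bochner_Integration.integral_cong[OF refl])
         (simp add: complex_norm_square[symmetric] del: of_real_power)
    also have "\<dots> = complex_of_real (2 * pi * (LINT x|lborel. (cmod (h x))\<^sup>2))"
      by (subst integral_complex_of_real) simp
    finally show ?thesis .
  qed
  finally show ?thesis unfolding eq .
qed


definition clip :: "real \<Rightarrow> complex \<Rightarrow> complex" where
  "clip M z = z / complex_of_real (max 1 (cmod z * inverse M))"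

lemma clip_cont: "continuous_on UNIV (clip M)"
proof -
  have c: "continuous_on UNIV (\<lambda>z. complex_of_real (max 1 (cmod z * inverse M)))"
    by (intro continuous_intros)
  have "continuous_on UNIV (\<lambda>z. z / complex_of_real (max 1 (cmod z * inverse M)))"
    by (rule continuous_on_divide[OF continuous_on_id c]) (auto simp: max_def)
  then show ?thesis unfolding clip_def[abs_def] .
qed

lemma clip_norm: assumes "M > 0" shows "cmod (clip M z) \<le> M"
proof (cases "cmod z \<le> M")
  case True
  then have "max 1 (cmod z * inverse M) = 1" using assms by (auto simp: max_def field_simps)
  then show ?thesis using True by (simp add: clip_def)
next
  case False
  then have m: "max 1 (cmod z * inverse M) = cmod z / M" using assms by (auto simp: max_def field_simps)
  have a: "\<bar>cmod z / M\<bar> = cmod z / M" using assms by simp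
  have "cmod (clip M z) = cmod z / (cmod z / M)"
    unfolding clip_def m norm_divide norm_of_real a by (rule refl)
  also have "\<dots> = M" using False assms by (auto simp: field_simps)
  finally show ?thesis by simp
qed

lemma clip_small: assumes "M > 0" "cmod z \<le> M" shows "clip M z = z"
proof -
  have "max 1 (cmod z * inverse M) = 1" using assms by (auto simp: max_def field_simps)
  then show ?thesis by (simp add: clip_def)
qed

lemma clip_zero[simp]: "clip M 0 = 0"
  by (simp add: clip_def)

lemma clip_diff: "cmod (z - clip M z) \<le> cmod z"
proof -
  define m where "m = max 1 (cmod z * inverse M)"
  have m1: "m \<ge> 1" unfolding m_def by simp
  have "z - clip M z = z * complex_of_real (1 - 1/m)"
    unfolding clip_def m_def[symmetric] using m1 by (simp add: field_simps)
  then have "cmod (z - clip M z) = cmod z * \<bar>1 - 1/m\<bar>" by (simp only: norm_mult norm_of_real)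
  also have "cmod z * \<bar>1 - 1/m\<bar> \<le> cmod z * 1"
    using m1 by (intro mult_left_mono) (auto simp: field_simps)
  finally show ?thesis by simp
qed

lemma clip_meas[measurable]: "f \<in> borel_measurable M' \<Longrightarrow> (\<lambda>x. clip M (f x)) \<in> borel_measurable M'"
  by (rule borel_measurable_continuous_on[OF clip_cont])

definition chi :: "real \<Rightarrow> real" where
  "chi x = max 0 (min 1 (2 - \<bar>x\<bar>))"

lemma chi_cont: "continuous_on UNIV chi"
  unfolding chi_def by (intro continuous_intros)

lemma chi_props: "0 \<le> chi x" "chi x \<le> 1" "\<bar>x\<bar> \<le> 1 \<Longrightarrow> chi x = 1" "2 \<le> \<bar>x\<bar> \<Longrightarrow> chi x = 0"
  unfolding chi_def by auto

lemma sq_tri: "(cmod (a - c))\<^sup>2 \<le> 2 * (cmod (a - b))\<^sup>2 + 2 * (cmod (b - c))\<^sup>2"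
proof -
  have "cmod (a - c) \<le> cmod (a - b) + cmod (b - c)" using norm_triangle_ineq[of "a - b" "b - c"] by simp
  then have "(cmod (a - c))\<^sup>2 \<le> (cmod (a - b) + cmod (b - c))\<^sup>2"
    by (intro power_mono) auto
  also have "\<dots> \<le> 2 * (cmod (a - b))\<^sup>2 + 2 * (cmod (b - c))\<^sup>2"
    using sum_squares_bound[of "cmod (a-b)" "cmod (b-c)"] by (simp add: power2_eq_square algebra_simps)
  finally show ?thesis .
qed

lemma density:
  fixes F :: "real \<Rightarrow> complex"
  assumes Fm[measurable]: "F \<in> borel_measurable borel"
    and Fs: "\<And>x. 1 < \<bar>x\<bar> \<Longrightarrow> F x = 0"
    and F2: "integrable lborel (\<lambda>x. (cmod (F x))\<^sup>2)"
    and e: "e > 0"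
  shows "\<exists>h. continuous_on UNIV h \<and> (\<exists>B. \<forall>x. cmod (h x) \<le> B) \<and> (\<forall>x. 2 < \<bar>x\<bar> \<longrightarrow> h x = 0)
      \<and> integrable lborel (\<lambda>x. (cmod (F x - h x))\<^sup>2) \<and> (LINT x|lborel. (cmod (F x - h x))\<^sup>2) < e"
proof -
  have lim1: "(\<lambda>n. LINT x|lborel. (cmod (F x - clip (real (Suc n)) (F x)))\<^sup>2) \<longlonglongrightarrow> (LINT (x::real)|lborel. 0)"
  proof -
    have d1: "(\<lambda>x::real. 0::real) \<in> borel_measurable lborel" by simp
    have d2: "(\<lambda>x. (cmod (F x - clip (real (Suc i)) (F x)))\<^sup>2) \<in> borel_measurable lborel" for i by measurable
    have d3: "integrable lborel (\<lambda>x. (cmod (F x))\<^sup>2)" by (rule F2)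
    have d5: "AE x in lborel. norm ((cmod (F x - clip (real (Suc i)) (F x)))\<^sup>2) \<le> (cmod (F x))\<^sup>2" for i
      by (intro AE_I2) (auto intro!: power_mono clip_diff)
    have d4: "AE x in lborel. (\<lambda>i. (cmod (F x - clip (real (Suc i)) (F x)))\<^sup>2) \<longlonglongrightarrow> 0"
    proof (rule AE_I2)
      fix x
      obtain N :: nat where N: "cmod (F x) \<le> real N" using real_arch_simple by blast
      have "eventually (\<lambda>i. (cmod (F x - clip (real (Suc i)) (F x)))\<^sup>2 = 0) sequentially"
        unfolding eventually_sequentially
        by (rule exI[of _ N]) (use N in \<open>auto simp: clip_small\<close>)
      then show "(\<lambda>i. (cmod (F x - clip (real (Suc i)) (F x)))\<^sup>2) \<longlonglongrightarrow> 0"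
        by (rule tendsto_eventually)
    qed
    show ?thesis by (rule Bochner_Integration.integral_dominated_convergence[OF d1 d2 d3 d4 d5])
  qed
  then obtain n1 where n1: "(LINT x|lborel. (cmod (F x - clip (real (Suc n1)) (F x)))\<^sup>2) < e / 4"
    using e by (auto dest!: LIMSEQ_D[where r="e/4"] simp: abs_less_iff)
  define M where "M = real (Suc n1)"
  have M0: "M > 0" unfolding M_def by simp
  have int1: "integrable lborel (\<lambda>x. (cmod (F x - clip M (F x)))\<^sup>2)"
    by (rule Bochner_Integration.integrable_bound[OF F2]) (auto intro!: AE_I2 power_mono clip_diff)
  have "F \<in> borel_measurable lborel" using Fm by simp
  then have "F \<in> borel_measurable lebesgue" by (rule measurable_completion)
  then have "F \<in> borel_measurable (lebesgue_on UNIV)" by (rule measurable_restrict_space1)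
  then have "F measurable_on UNIV"
    by (subst measurable_on_iff_borel_measurable) auto
  then obtain N g where N: "negligible N" and gc: "\<And>n. continuous_on UNIV (g n)"
      and gl: "\<And>x. x \<notin> N \<Longrightarrow> (\<lambda>n. g n x) \<longlonglongrightarrow> F x"
    unfolding measurable_on_def by auto
  have AEN: "AE x in lborel. x \<notin> N"
  proof -
    have "AE x in lebesgue. x \<notin> N"
      using N by (intro AE_not_in) (simp add: negligible_iff_null_sets)
    then show ?thesis by (simp add: AE_completion_iff)
  qed
  define h where "h n x = complex_of_real (chi x) * clip M (g n x)" for n x
  have hc: "continuous_on UNIV (h n)" for n
    unfolding h_def
    by (intro continuous_intros continuous_on_compose2[OF clip_cont gc] continuous_on_compose2[OF chi_cont]) auto
  have hm[measurable]: "h n \<in> borel_measurable borel" for n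
    using hc by (rule borel_measurable_continuous_onI)
  have hb: "cmod (h n x) \<le> M" for n x
  proof -
    have "cmod (h n x) = chi x * cmod (clip M (g n x))"
      unfolding h_def using chi_props(1)[of x] by (simp add: norm_mult)
    also have "\<dots> \<le> 1 * M"
      using chi_props(1,2)[of x] clip_norm[OF M0] by (intro mult_mono) auto
    finally show ?thesis by simp
  qed
  have hs: "2 < \<bar>x\<bar> \<Longrightarrow> h n x = 0" for n x
    unfolding h_def using chi_props(4)[of x] by simp
  have lim2: "(\<lambda>n. LINT x|lborel. (cmod (clip M (F x) - h n x))\<^sup>2) \<longlonglongrightarrow> (LINT (x::real)|lborel. 0)"
  proof -
    have d1: "(\<lambda>x::real. 0::real) \<in> borel_measurable lborel" by simp
    have d2: "(\<lambda>x. (cmod (clip M (F x) - h i x))\<^sup>2) \<in> borel_measurable lborel" for i by measurable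
    have d3: "integrable lborel (\<lambda>x::real. (2*M)\<^sup>2 * indicator {-2..2} x)"
      by (intro integrable_mult_right) (simp add: integrable_indicator_iff emeasure_lborel_Icc_eq)
    have d5: "AE x in lborel. norm ((cmod (clip M (F x) - h i x))\<^sup>2) \<le> (2*M)\<^sup>2 * indicator {-2..2} x" for i
    proof (rule AE_I2)
      fix x
      show "norm ((cmod (clip M (F x) - h i x))\<^sup>2) \<le> (2*M)\<^sup>2 * indicator {-2..2} x"
      proof (cases "x \<in> {-2..2}")
        case True
        have "cmod (clip M (F x) - h i x) \<le> cmod (clip M (F x)) + cmod (h i x)"
          by (rule norm_triangle_ineq4)
        also have "\<dots> \<le> 2 * M" using clip_norm[OF M0, of "F x"] hb[of i x] by simp
        finally have "(cmod (clip M (F x) - h i x))\<^sup>2 \<le> (2*M)\<^sup>2"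
          by (intro power_mono) auto
        then show ?thesis using True by simp
      next
        case False
        then have "2 < \<bar>x\<bar>" by auto
        then show ?thesis using False hs[of x i] Fs[of x] by simp
      qed
    qed
    have d4: "AE x in lborel. (\<lambda>i. (cmod (clip M (F x) - h i x))\<^sup>2) \<longlonglongrightarrow> 0"
      using AEN
    proof eventually_elim
      fix x assume xN: "x \<notin> N"
      have "(\<lambda>i. clip M (g i x)) \<longlonglongrightarrow> clip M (F x)"
        using gl[OF xN] clip_cont by (auto intro: continuous_on_tendsto_compose[where s=UNIV])
      then have t1: "(\<lambda>i. h i x) \<longlonglongrightarrow> complex_of_real (chi x) * clip M (F x)"
        unfolding h_def by (intro tendsto_intros)
      have eq: "complex_of_real (chi x) * clip M (F x) = clip M (F x)"
        using chi_props(3)[of x] Fs[of x] by (cases "\<bar>x\<bar> \<le> 1") auto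
      from t1 have "(\<lambda>i. h i x) \<longlonglongrightarrow> clip M (F x)" unfolding eq .
      then have "(\<lambda>i. (cmod (clip M (F x) - h i x))\<^sup>2) \<longlonglongrightarrow> (cmod (clip M (F x) - clip M (F x)))\<^sup>2"
        by (intro tendsto_intros) assumption
      then show "(\<lambda>i. (cmod (clip M (F x) - h i x))\<^sup>2) \<longlonglongrightarrow> 0" by simp
    qed
    show ?thesis by (rule Bochner_Integration.integral_dominated_convergence[OF d1 d2 d3 d4 d5])
  qed
  then obtain n2 where n2: "(LINT x|lborel. (cmod (clip M (F x) - h n2 x))\<^sup>2) < e / 4"
    using e by (auto dest!: LIMSEQ_D[where r="e/4"] simp: abs_less_iff)
  have int2: "integrable lborel (\<lambda>x. (cmod (clip M (F x) - h n2 x))\<^sup>2)"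
  proof (rule Bochner_Integration.integrable_bound[where f="\<lambda>x::real. (2*M)\<^sup>2 * indicator {-2..2} x"])
    show "integrable lborel (\<lambda>x::real. (2*M)\<^sup>2 * indicator {-2..2} x)"
      by (intro integrable_mult_right) (simp add: integrable_indicator_iff emeasure_lborel_Icc_eq)
    show "(\<lambda>x. (cmod (clip M (F x) - h n2 x))\<^sup>2) \<in> borel_measurable lborel" by measurable
    show "AE x in lborel. norm ((cmod (clip M (F x) - h n2 x))\<^sup>2) \<le> norm ((2*M)\<^sup>2 * indicator {-2..2} x)"
    proof (rule AE_I2)
      fix x
      show "norm ((cmod (clip M (F x) - h n2 x))\<^sup>2) \<le> norm ((2*M)\<^sup>2 * indicator {-2..2} x)"
      proof (cases "x \<in> {-2..2}")
        case True
        have "cmod (clip M (F x) - h n2 x) \<le> cmod (clip M (F x)) + cmod (h n2 x)"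
          by (rule norm_triangle_ineq4)
        also have "\<dots> \<le> 2 * M" using clip_norm[OF M0, of "F x"] hb[of n2 x] by simp
        finally have "(cmod (clip M (F x) - h n2 x))\<^sup>2 \<le> (2*M)\<^sup>2"
          by (intro power_mono) auto
        then show ?thesis using True by simp
      next
        case False
        then have "2 < \<bar>x\<bar>" by auto
        then show ?thesis using False hs[of x n2] Fs[of x] by simp
      qed
    qed
  qed
  have int3: "integrable lborel (\<lambda>x. (cmod (F x - h n2 x))\<^sup>2)"
    by (rule Bochner_Integration.integrable_bound[where f="\<lambda>x. 2 * (cmod (F x - clip M (F x)))\<^sup>2 + 2 * (cmod (clip M (F x) - h n2 x))\<^sup>2"])
       (use int1 int2 in \<open>auto intro!: AE_I2 order_trans[OF sq_tri]\<close>)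
  have "(LINT x|lborel. (cmod (F x - h n2 x))\<^sup>2) \<le>
      (LINT x|lborel. 2 * (cmod (F x - clip M (F x)))\<^sup>2 + 2 * (cmod (clip M (F x) - h n2 x))\<^sup>2)"
    by (rule integral_mono) (use int1 int2 int3 sq_tri in auto)
  also have "\<dots> = 2 * (LINT x|lborel. (cmod (F x - clip M (F x)))\<^sup>2) + 2 * (LINT x|lborel. (cmod (clip M (F x) - h n2 x))\<^sup>2)"
    using int1 int2 by simp
  also have "\<dots> < e" using n1 n2 unfolding M_def by simp
  finally show ?thesis
    using hc[of n2] hb[of n2] hs[of _ n2] int3 by blast
qed


definition IR :: "real \<Rightarrow> (real \<Rightarrow> complex) \<Rightarrow> real" where
  "IR R k = (LINT w|lborel. wR R w * (cmod (FT k w))\<^sup>2)"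

lemma FT_integrand_int:
  fixes k :: "real \<Rightarrow> complex"
  assumes k: "integrable lborel k"
  shows "integrable lborel (\<lambda>y. iexp (w * y) * k y)"
proof -
  have [measurable]: "k \<in> borel_measurable borel" using k by auto
  show ?thesis
    by (rule Bochner_Integration.integrable_bound[OF integrable_norm[OF k]])
       (auto simp: norm_mult)
qed

lemma FT_diff:
  fixes a b :: "real \<Rightarrow> complex"
  assumes "integrable lborel a" "integrable lborel b"
  shows "FT (\<lambda>x. a x - b x) w = FT a w - FT b w"
  unfolding FT_def using FT_integrand_int[OF assms(1)] FT_integrand_int[OF assms(2)]
  by (simp add: right_diff_distrib)

lemma IR_int:
  fixes k :: "real \<Rightarrow> complex"
  assumes k: "integrable lborel k" and R: "R > 0"
  shows "integrable lborel (\<lambda>w. wR R w * (cmod (FT k w))\<^sup>2)"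
proof -
  have [measurable]: "k \<in> borel_measurable borel" using k by auto
  define L where "L = (LINT y|lborel. cmod (k y))"
  show ?thesis
  proof (rule Bochner_Integration.integrable_bound[where f="\<lambda>w. L\<^sup>2 * wR R w"])
    show "integrable lborel (\<lambda>w. L\<^sup>2 * wR R w)" using wR_integrable[OF R] by auto
    show "(\<lambda>w. wR R w * (cmod (FT k w))\<^sup>2) \<in> borel_measurable lborel" by measurable
    show "AE w in lborel. norm (wR R w * (cmod (FT k w))\<^sup>2) \<le> norm (L\<^sup>2 * wR R w)"
    proof (rule AE_I2)
      fix w
      have "(cmod (FT k w))\<^sup>2 \<le> L\<^sup>2"
        using FT_bound[OF k, of w] unfolding L_def by (intro power_mono) auto
      then show "norm (wR R w * (cmod (FT k w))\<^sup>2) \<le> norm (L\<^sup>2 * wR R w)"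
        using wR_nonneg[of R w] by (simp add: mult.commute mult_left_mono)
    qed
  qed
qed

lemma IR_nonneg: "IR R k \<ge> 0"
  unfolding IR_def by (auto intro!: integral_nonneg simp: wR_nonneg)

lemma IR_le:
  fixes k :: "real \<Rightarrow> complex"
  assumes k: "integrable lborel k" and k2: "integrable lborel (\<lambda>x. (cmod (k x))\<^sup>2)" and R: "R > 0"
  shows "IR R k \<le> 2 * pi * (LINT x|lborel. (cmod (k x))\<^sup>2)"
proof -
  have [measurable]: "k \<in> borel_measurable borel" using k by auto
  have "ennreal (IR R k) = ennreal (cmod (complex_of_real (IR R k)))"
    using IR_nonneg[of R k] by simp
  also have "complex_of_real (IR R k) = (LINT x|lborel. LINT y|lborel. k x * cnj (k y) * complex_of_real (gk R (x - y)))"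
    unfolding IR_def by (rule fubini_id[OF k R])
  also have "ennreal (cmod \<dots>) \<le> ennreal (2*pi) * (\<integral>\<^sup>+ x. ennreal ((cmod (k x))\<^sup>2) \<partial>lborel)"
    by (rule schur) (auto simp: R)
  also have "(\<integral>\<^sup>+ x. ennreal ((cmod (k x))\<^sup>2) \<partial>lborel) = ennreal (LINT x|lborel. (cmod (k x))\<^sup>2)"
    using k2 by (subst nn_integral_eq_integral) auto
  also have "ennreal (2*pi) * \<dots> = ennreal (2 * pi * (LINT x|lborel. (cmod (k x))\<^sup>2))"
    by (simp add: ennreal_mult)
  finally show ?thesis
    by (subst (asm) ennreal_le_iff) (auto intro!: mult_nonneg_nonneg integral_nonneg)
qed

lemma IR_le_Q:
  fixes k :: "real \<Rightarrow> complex"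
  assumes k: "integrable lborel k" and R: "R > 0"
  shows "ennreal (IR R k) \<le> (\<integral>\<^sup>+ w. ennreal ((cmod (FT k w))\<^sup>2) \<partial>lborel)"
proof -
  have "ennreal (IR R k) = (\<integral>\<^sup>+ w. ennreal (wR R w * (cmod (FT k w))\<^sup>2) \<partial>lborel)"
    unfolding IR_def using IR_int[OF k R] by (subst nn_integral_eq_integral) (auto simp: wR_nonneg)
  also have "\<dots> \<le> (\<integral>\<^sup>+ w. ennreal ((cmod (FT k w))\<^sup>2) \<partial>lborel)"
    by (intro nn_integral_mono ennreal_leI) (simp add: mult_left_le_one_le wR_nonneg wR_le1)
  finally show ?thesis .
qed


lemma bounded_support_int:
  fixes h :: "real \<Rightarrow> complex"
  assumes hm[measurable]: "h \<in> borel_measurable borel" and hb: "\<And>x. cmod (h x) \<le> B"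
    and hs: "\<And>x. L < \<bar>x\<bar> \<Longrightarrow> h x = 0"
  shows "integrable lborel h" "integrable lborel (\<lambda>x. (cmod (h x))\<^sup>2)"
proof -
  have ind: "integrable lborel (\<lambda>x::real. c * indicator {-L..L} x)" for c :: real
    by (intro integrable_mult_right) (simp add: integrable_indicator_iff emeasure_lborel_Icc_eq)
  show "integrable lborel h"
  proof (rule Bochner_Integration.integrable_bound[OF ind[of B]])
    show "AE x in lborel. norm (h x) \<le> norm (B * indicator {-L..L} x)"
    proof (rule AE_I2)
      fix x
      have B0: "B \<ge> 0" using hb[of x] norm_ge_zero order_trans by blast
      show "norm (h x) \<le> norm (B * indicator {-L..L} x)"
        using hb[of x] hs[of x] B0 by (cases "x \<in> {-L..L}") auto
    qed
  qed simp
  show "integrable lborel (\<lambda>x. (cmod (h x))\<^sup>2)"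
  proof (rule Bochner_Integration.integrable_bound[OF ind[of "B\<^sup>2"]])
    show "AE x in lborel. norm ((cmod (h x))\<^sup>2) \<le> norm (B\<^sup>2 * indicator {-L..L} x)"
    proof (rule AE_I2)
      fix x
      have B0: "B \<ge> 0" using hb[of x] norm_ge_zero order_trans by blast
      have "(cmod (h x))\<^sup>2 \<le> B\<^sup>2" using hb[of x] by (intro power_mono) auto
      then show "norm ((cmod (h x))\<^sup>2) \<le> norm (B\<^sup>2 * indicator {-L..L} x)"
        using hs[of x] by (cases "x \<in> {-L..L}") auto
    qed
  qed simp
qed

lemma core:
  fixes F :: "real \<Rightarrow> complex"
  assumes Fm[measurable]: "F \<in> borel_measurable borel"
    and Fs: "\<And>x. 1 < \<bar>x\<bar> \<Longrightarrow> F x = 0"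
    and F2: "integrable lborel (\<lambda>x. (cmod (F x))\<^sup>2)"
  shows "ennreal (LINT x|lborel. (cmod (F x))\<^sup>2) \<le> ennreal (2/pi) * (\<integral>\<^sup>+ w. ennreal ((cmod (FT F w))\<^sup>2) \<partial>lborel)"
proof -
  define Q where "Q = (\<integral>\<^sup>+ w. ennreal ((cmod (FT F w))\<^sup>2) \<partial>lborel)"
  have Fi: "integrable lborel F"
  proof (rule Bochner_Integration.integrable_bound[where f="\<lambda>x. indicator {-1..1} x + (cmod (F x))\<^sup>2"])
    show "integrable lborel (\<lambda>x::real. indicator {-1..1} x + (cmod (F x))\<^sup>2)"
      using F2 by (intro Bochner_Integration.integrable_add) (simp_all add: integrable_indicator_iff)
    show "AE x in lborel. norm (F x) \<le> norm (indicator {-1..1} x + (cmod (F x))\<^sup>2)"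
    proof (rule AE_I2)
      fix x
      show "norm (F x) \<le> norm (indicator {-1..1} x + (cmod (F x))\<^sup>2)"
      proof (cases "x \<in> {-1..1}")
        case True
        have "cmod (F x) \<le> 1 + (cmod (F x))\<^sup>2"
        proof (cases "cmod (F x) \<le> 1")
          case True
          then show ?thesis using zero_le_power2[of "cmod (F x)"] by linarith
        next
          case False
          then have "cmod (F x) * 1 \<le> cmod (F x) * cmod (F x)"
            by (intro mult_left_mono) auto
          then show ?thesis by (simp add: power2_eq_square)
        qed
        then show ?thesis using True by simp
      next
        case False
        then show ?thesis using Fs[of x] by auto
      qed
    qed
  qed simp
  show ?thesis
  proof (cases "Q = \<infinity>")
    case True
    then show ?thesis unfolding Q_def[symmetric] by (simp add: ennreal_mult_top)
  next
    case False
    then obtain q where q: "Q = ennreal q" "q \<ge> 0" by (cases Q) auto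
    have main: "(LINT x|lborel. (cmod (F x))\<^sup>2) \<le> 2 * q / pi + e" if e: "e > 0" for e
    proof -
      obtain h where hc: "continuous_on UNIV h" and hB: "\<exists>B. \<forall>x. cmod (h x) \<le> B"
        and hs: "\<forall>x. 2 < \<bar>x\<bar> \<longrightarrow> h x = 0"
        and int3: "integrable lborel (\<lambda>x. (cmod (F x - h x))\<^sup>2)"
        and E: "(LINT x|lborel. (cmod (F x - h x))\<^sup>2) < e / 6"
        using density[OF Fm Fs F2, of "e/6"] e by auto
      obtain B where hb: "\<And>x. cmod (h x) \<le> B" using hB by auto
      define EE where "EE = (LINT x|lborel. (cmod (F x - h x))\<^sup>2)"
      have hm[measurable]: "h \<in> borel_measurable borel"
        using hc by (rule borel_measurable_continuous_onI)
      have hi: "integrable lborel h" and h2: "integrable lborel (\<lambda>x. (cmod (h x))\<^sup>2)"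
        using bounded_support_int[OF hm hb, of 2] hs by auto
      define d where "d x = h x - F x" for x
      have di: "integrable lborel d" unfolding d_def using hi Fi by auto
      have d2: "integrable lborel (\<lambda>x. (cmod (d x))\<^sup>2)"
        unfolding d_def using int3 by (simp add: norm_minus_commute)
      have dE: "(LINT x|lborel. (cmod (d x))\<^sup>2) = EE"
        unfolding d_def EE_def by (simp add: norm_minus_commute)
      have bound: "IR (real (Suc n)) h \<le> 2 * q + 4 * pi * EE" for n
      proof -
        let ?R = "real (Suc n)"
        have R: "?R > 0" by simp
        have "IR ?R h \<le> (LINT w|lborel. 2 * (wR ?R w * (cmod (FT F w))\<^sup>2) + 2 * (wR ?R w * (cmod (FT d w))\<^sup>2))"
          unfolding IR_def
        proof (rule integral_mono)
          show "integrable lborel (\<lambda>w. wR ?R w * (cmod (FT h w))\<^sup>2)" by (rule IR_int[OF hi R])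
          show "integrable lborel (\<lambda>w. 2 * (wR ?R w * (cmod (FT F w))\<^sup>2) + 2 * (wR ?R w * (cmod (FT d w))\<^sup>2))"
            using IR_int[OF Fi R] IR_int[OF di R] by auto
          fix w
          have fd: "FT d w = FT h w - FT F w" unfolding d_def by (rule FT_diff[OF hi Fi])
          have "(cmod (FT h w))\<^sup>2 \<le> 2 * (cmod (FT F w))\<^sup>2 + 2 * (cmod (FT d w))\<^sup>2"
            using sq_tri[where a="FT h w" and b="FT F w" and c=0] unfolding fd by simp
          then have "wR ?R w * (cmod (FT h w))\<^sup>2 \<le> wR ?R w * (2 * (cmod (FT F w))\<^sup>2 + 2 * (cmod (FT d w))\<^sup>2)"
            by (rule mult_left_mono) (rule wR_nonneg)
          then show "wR ?R w * (cmod (FT h w))\<^sup>2 \<le> 2 * (wR ?R w * (cmod (FT F w))\<^sup>2) + 2 * (wR ?R w * (cmod (FT d w))\<^sup>2)"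
            by (simp add: algebra_simps)
        qed
        also have "\<dots> = 2 * IR ?R F + 2 * IR ?R d"
          unfolding IR_def using IR_int[OF Fi R] IR_int[OF di R] by simp
        also have "IR ?R F \<le> q"
          using IR_le_Q[OF Fi R] q unfolding Q_def[symmetric] by (simp add: ennreal_le_iff)
        also have "IR ?R d \<le> 2 * pi * EE"
          using IR_le[OF di d2 R] dE by simp
        finally show ?thesis by simp
      qed
      have lim: "(\<lambda>n. IR (real (Suc n)) h) \<longlonglongrightarrow> 2 * pi * (LINT x|lborel. (cmod (h x))\<^sup>2)"
      proof -
        have "(\<lambda>n. complex_of_real (IR (real (Suc n)) h)) \<longlonglongrightarrow> complex_of_real (2 * pi * (LINT x|lborel. (cmod (h x))\<^sup>2))"
          unfolding IR_def fubini_id[OF hi of_nat_0_less_iff[THEN iffD2, OF zero_less_Suc]]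
          by (rule approx_id[OF hc hb, of 2]) (use hs in auto)
        then show ?thesis by (simp only: tendsto_of_real_iff)
      qed
      have hle: "2 * pi * (LINT x|lborel. (cmod (h x))\<^sup>2) \<le> 2 * q + 4 * pi * EE"
        by (rule LIMSEQ_le_const2[OF lim]) (use bound in auto)
      have Fle: "(LINT x|lborel. (cmod (F x))\<^sup>2) \<le> 2 * EE + 2 * (LINT x|lborel. (cmod (h x))\<^sup>2)"
      proof -
        have "(LINT x|lborel. (cmod (F x))\<^sup>2) \<le> (LINT x|lborel. 2 * (cmod (F x - h x))\<^sup>2 + 2 * (cmod (h x))\<^sup>2)"
        proof (rule integral_mono)
          show "integrable lborel (\<lambda>x. (cmod (F x))\<^sup>2)" by (rule F2)
          show "integrable lborel (\<lambda>x. 2 * (cmod (F x - h x))\<^sup>2 + 2 * (cmod (h x))\<^sup>2)"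
            using int3 h2 by auto
          fix x show "(cmod (F x))\<^sup>2 \<le> 2 * (cmod (F x - h x))\<^sup>2 + 2 * (cmod (h x))\<^sup>2"
            using sq_tri[where a="F x" and b="h x" and c=0] by simp
        qed
        also have "\<dots> = 2 * EE + 2 * (LINT x|lborel. (cmod (h x))\<^sup>2)"
          unfolding EE_def using int3 h2 by simp
        finally show ?thesis .
      qed
      have "2 * (LINT x|lborel. (cmod (h x))\<^sup>2) \<le> (2 * q + 4 * pi * EE) / pi"
        using hle pi_gt_zero by (subst pos_le_divide_eq) (auto simp: mult_ac)
      then have "(LINT x|lborel. (cmod (F x))\<^sup>2) \<le> 2 * EE + (2 * q + 4 * pi * EE) / pi"
        using Fle by linarith
      also have "\<dots> = 2 * q / pi + 6 * EE" by (simp add: field_simps)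
      also have "\<dots> \<le> 2 * q / pi + e" using E unfolding EE_def by simp
      finally show ?thesis .
    qed
    have "(LINT x|lborel. (cmod (F x))\<^sup>2) \<le> 2 * q / pi"
      by (rule field_le_epsilon) (rule main)
    then have "ennreal (LINT x|lborel. (cmod (F x))\<^sup>2) \<le> ennreal (2 / pi * q)"
      by (intro ennreal_leI) simp
    also have "\<dots> = ennreal (2/pi) * Q" using q by (simp add: ennreal_mult[symmetric])
    finally show ?thesis unfolding Q_def .
  qed
qed


lemma wave_eq:
  fixes f :: "real \<Rightarrow> complex"
  assumes w: "\<omega> > 0" and s: "s = 1 \<or> s = -1"
  shows "wave_field f s \<omega> = (\<i> * exp (\<i> * complex_of_real \<omega>) / complex_of_real (2 * \<omega>)) *
     FT (\<lambda>x. indicator {-1<..<1} x *\<^sub>R f x) (- s * \<omega>)"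
proof -
  define c where "c y = \<i> * exp (\<i> * complex_of_real (\<omega> * \<bar>s - y\<bar>)) / complex_of_real (2 * \<omega>)" for y
  define K where "K = \<i> * exp (\<i> * complex_of_real \<omega>) / complex_of_real (2 * \<omega>)"
  have "wave_field f s \<omega> = (LINT y|lborel. indicator {-1..1} y *\<^sub>R (c y * f y))"
    unfolding wave_field_def set_lebesgue_integral_def c_def ..
  also have "\<dots> = (LINT y|lborel. indicator {-1<..<1} y *\<^sub>R (c y * f y))"
  proof (rule integral_discrete_difference[where X="{-1,1}"])
    fix y assume "y \<notin> {-1, 1::real}"
    then show "indicator {-1..1} y *\<^sub>R (c y * f y) = indicator {-1<..<1} y *\<^sub>R (c y * f y)"
      by (auto simp: indicator_def)
  qed auto
  also have "\<dots> = (LINT y|lborel. K * (iexp (- s * \<omega> * y) * (indicator {-1<..<1} y *\<^sub>R f y)))"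
  proof (rule Bochner_Integration.integral_cong[OF refl])
    fix y
    show "indicator {-1<..<1} y *\<^sub>R (c y * f y) = K * (iexp (- s * \<omega> * y) * (indicator {-1<..<1} y *\<^sub>R f y))"
    proof (cases "y \<in> {-1<..<1}")
      case True
      have ab: "\<bar>s - y\<bar> = 1 - s * y" using True s by auto
      have "\<omega> * \<bar>s - y\<bar> = \<omega> + (- s * \<omega> * y)"
        unfolding ab by (simp add: algebra_simps)
      then have "\<i> * complex_of_real (\<omega> * \<bar>s - y\<bar>) = \<i> * complex_of_real \<omega> + \<i> * complex_of_real (- s * \<omega> * y)"
        by (simp only: of_real_add distrib_left)
      then have "exp (\<i> * complex_of_real (\<omega> * \<bar>s - y\<bar>)) = exp (\<i> * complex_of_real \<omega>) * iexp (- s * \<omega> * y)"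
        by (simp only: exp_add)
      then show ?thesis using True unfolding c_def K_def by (simp add: mult_ac)
    next
      case False
      then show ?thesis by simp
    qed
  qed
  also have "\<dots> = K * FT (\<lambda>x. indicator {-1<..<1} x *\<^sub>R f x) (- s * \<omega>)"
    unfolding FT_def by (rule integral_mult_right_zero)
  finally show ?thesis unfolding K_def .
qed

lemma wave_sq:
  fixes f :: "real \<Rightarrow> complex"
  assumes w: "\<omega> > 0"
  shows "\<omega>\<^sup>2 * ((cmod (wave_field f (-1) \<omega>))\<^sup>2 + (cmod (wave_field f 1 \<omega>))\<^sup>2) =
     ((cmod (FT (\<lambda>x. indicator {-1<..<1} x *\<^sub>R f x) \<omega>))\<^sup>2 + (cmod (FT (\<lambda>x. indicator {-1<..<1} x *\<^sub>R f x) (- \<omega>)))\<^sup>2) / 4"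
proof -
  have nK: "cmod (\<i> * exp (\<i> * complex_of_real \<omega>) / complex_of_real (2 * \<omega>)) = 1 / (2 * \<omega>)"
    using w by (simp add: norm_divide norm_mult)
  define F where "F = (\<lambda>x. indicator {-1<..<1} x *\<^sub>R f x)"
  define K where "K = \<i> * exp (\<i> * complex_of_real \<omega>) / complex_of_real (2 * \<omega>)"
  have u1: "wave_field f (-1) \<omega> = K * FT F \<omega>"
    using wave_eq[OF w, of "-1" f] unfolding F_def K_def by simp
  have u2: "wave_field f 1 \<omega> = K * FT F (- \<omega>)"
    using wave_eq[OF w, of 1 f] unfolding F_def K_def by simp
  show ?thesis
    unfolding F_def[symmetric] u1 u2 norm_mult K_def[symmetric] nK[unfolded K_def[symmetric]]
    using w by (simp add: power_mult_distrib power_divide field_simps)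
qed


lemma reflect_split:
  fixes G :: "real \<Rightarrow> real"
  assumes Gm[measurable]: "G \<in> borel_measurable borel" and G0: "\<And>x. G x \<ge> 0"
  shows "(\<integral>\<^sup>+\<omega>\<in>{0<..}. ennreal ((G \<omega> + G (- \<omega>)) / 4) \<partial>lborel) = ennreal (1/4) * (\<integral>\<^sup>+ \<omega>. ennreal (G \<omega>) \<partial>lborel)"
proof -
  have "(\<integral>\<^sup>+\<omega>\<in>{0<..}. ennreal ((G \<omega> + G (- \<omega>)) / 4) \<partial>lborel) =
      (\<integral>\<^sup>+\<omega>. ennreal (1/4) * (ennreal (G \<omega>) * indicator {0<..} \<omega> + ennreal (G (- \<omega>)) * indicator {0<..} \<omega>) \<partial>lborel)"
  proof (rule nn_integral_cong)
    fix x
    show "ennreal ((G x + G (- x)) / 4) * indicator {0<..} x =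
        ennreal (1/4) * (ennreal (G x) * indicator {0<..} x + ennreal (G (- x)) * indicator {0<..} x)"
      using G0[of x] G0[of "-x"]
      by (auto simp: indicator_def ennreal_plus[symmetric] ennreal_mult[symmetric] add_divide_distrib
               simp del: ennreal_plus)
  qed
  also have "\<dots> = ennreal (1/4) * ((\<integral>\<^sup>+\<omega>. ennreal (G \<omega>) * indicator {0<..} \<omega> \<partial>lborel) +
       (\<integral>\<^sup>+\<omega>. ennreal (G (- \<omega>)) * indicator {0<..} \<omega> \<partial>lborel))"
    by (simp add: nn_integral_cmult nn_integral_add)
  also have "(\<integral>\<^sup>+\<omega>. ennreal (G (- \<omega>)) * indicator {0<..} \<omega> \<partial>lborel) =
      (\<integral>\<^sup>+\<omega>. ennreal (G \<omega>) * indicator {..<0} \<omega> \<partial>lborel)"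
  proof -
    have "(\<integral>\<^sup>+\<omega>. ennreal (G \<omega>) * indicator {..<0} \<omega> \<partial>lborel) =
        ennreal \<bar>-1\<bar> * (\<integral>\<^sup>+\<omega>. ennreal (G (0 + -1 * \<omega>)) * indicator {..<0} (0 + -1 * \<omega>) \<partial>lborel)"
      by (rule nn_integral_real_affine) auto
    also have "\<dots> = (\<integral>\<^sup>+\<omega>. ennreal (G (- \<omega>)) * indicator {0<..} \<omega> \<partial>lborel)"
      by (auto intro!: nn_integral_cong simp: indicator_def)
    finally show ?thesis by simp
  qed
  also have "(\<integral>\<^sup>+\<omega>. ennreal (G \<omega>) * indicator {0<..} \<omega> \<partial>lborel) + (\<integral>\<^sup>+\<omega>. ennreal (G \<omega>) * indicator {..<0} \<omega> \<partial>lborel)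
      = (\<integral>\<^sup>+\<omega>. ennreal (G \<omega>) * indicator {0<..} \<omega> + ennreal (G \<omega>) * indicator {..<0} \<omega> \<partial>lborel)"
    by (simp add: nn_integral_add)
  also have "\<dots> = (\<integral>\<^sup>+\<omega>. ennreal (G \<omega>) \<partial>lborel)"
  proof (rule nn_integral_cong_AE)
    show "AE x in lborel. ennreal (G x) * indicator {0<..} x + ennreal (G x) * indicator {..<0} x = ennreal (G x)"
      using AE_lborel_singleton[of 0] by eventually_elim (auto simp: indicator_def)
  qed
  finally show ?thesis .
qed

theorem lemma2p3:
  shows "\<exists>C::real. C > 0 \<and>
    (\<forall>f :: real \<Rightarrow> complex.
       set_borel_measurable lborel {-1<..<1} f \<longrightarrow>
       set_integrable lborel {-1<..<1} (\<lambda>y. (cmod (f y))\<^sup>2) \<longrightarrow>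
       (\<exists>a<1. \<forall>y\<in>{-1<..<1}. a < \<bar>y\<bar> \<longrightarrow> f y = 0) \<longrightarrow>
       ennreal (LINT y:{-1<..<1}|lborel. (cmod (f y))\<^sup>2)
         \<le> ennreal C * (\<integral>\<^sup>+\<omega>\<in>{0<..}.
              ennreal (\<omega>\<^sup>2 * ((cmod (wave_field f (-1) \<omega>))\<^sup>2
                              + (cmod (wave_field f 1 \<omega>))\<^sup>2)) \<partial>lborel))"
proof (intro exI[of _ 3] conjI allI impI)
  show "(3::real) > 0" by simp
  fix f :: "real \<Rightarrow> complex"
  assume fm: "set_borel_measurable lborel {-1<..<1} f"
    and f2: "set_integrable lborel {-1<..<1} (\<lambda>y. (cmod (f y))\<^sup>2)"
  define F where "F = (\<lambda>x. indicator {-1<..<1} x *\<^sub>R f x)"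
  have Fm[measurable]: "F \<in> borel_measurable borel"
    using fm unfolding set_borel_measurable_def F_def by simp
  have Fs: "\<And>x. 1 < \<bar>x\<bar> \<Longrightarrow> F x = 0"
    unfolding F_def by (auto simp: indicator_def)
  have Fsq: "(cmod (F x))\<^sup>2 = indicator {-1<..<1} x *\<^sub>R (cmod (f x))\<^sup>2" for x
    unfolding F_def by (auto simp: indicator_def)
  have F2: "integrable lborel (\<lambda>x. (cmod (F x))\<^sup>2)"
    using f2 unfolding set_integrable_def Fsq .
  have lhs: "(LINT y:{-1<..<1}|lborel. (cmod (f y))\<^sup>2) = (LINT x|lborel. (cmod (F x))\<^sup>2)"
    unfolding set_lebesgue_integral_def Fsq ..
  define G where "G w = (cmod (FT F w))\<^sup>2" for w
  have Gm[measurable]: "G \<in> borel_measurable borel" unfolding G_def by measurable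
  have rhs: "(\<integral>\<^sup>+\<omega>\<in>{0<..}. ennreal (\<omega>\<^sup>2 * ((cmod (wave_field f (-1) \<omega>))\<^sup>2 + (cmod (wave_field f 1 \<omega>))\<^sup>2)) \<partial>lborel)
      = ennreal (1/4) * (\<integral>\<^sup>+ \<omega>. ennreal (G \<omega>) \<partial>lborel)"
  proof -
    have "(\<integral>\<^sup>+\<omega>\<in>{0<..}. ennreal (\<omega>\<^sup>2 * ((cmod (wave_field f (-1) \<omega>))\<^sup>2 + (cmod (wave_field f 1 \<omega>))\<^sup>2)) \<partial>lborel)
        = (\<integral>\<^sup>+\<omega>\<in>{0<..}. ennreal ((G \<omega> + G (- \<omega>)) / 4) \<partial>lborel)"
    proof (rule nn_integral_cong)
      fix w
      show "ennreal (w\<^sup>2 * ((cmod (wave_field f (-1) w))\<^sup>2 + (cmod (wave_field f 1 w))\<^sup>2)) * indicator {0<..} w =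
          ennreal ((G w + G (- w)) / 4) * indicator {0<..} w"
      proof (cases "w > 0")
        case True
        then show ?thesis unfolding wave_sq[OF True] G_def F_def by simp
      qed simp
    qed
    also have "\<dots> = ennreal (1/4) * (\<integral>\<^sup>+ \<omega>. ennreal (G \<omega>) \<partial>lborel)"
      by (rule reflect_split[OF Gm]) (simp add: G_def)
    finally show ?thesis .
  qed
  have "ennreal (LINT x|lborel. (cmod (F x))\<^sup>2) \<le> ennreal (2/pi) * (\<integral>\<^sup>+ \<omega>. ennreal (G \<omega>) \<partial>lborel)"
    using core[OF Fm Fs F2] unfolding G_def .
  also have "\<dots> = ennreal (8/pi) * (ennreal (1/4) * (\<integral>\<^sup>+ \<omega>. ennreal (G \<omega>) \<partial>lborel))"
    by (simp add: mult.assoc[symmetric] ennreal_mult[symmetric])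
  also have "\<dots> \<le> ennreal 3 * (ennreal (1/4) * (\<integral>\<^sup>+ \<omega>. ennreal (G \<omega>) \<partial>lborel))"
  proof (rule mult_right_mono)
    have "8 / pi \<le> 3" using pi_gt3 by (simp add: divide_le_eq)
    then show "ennreal (8/pi) \<le> ennreal 3" by (rule ennreal_leI)
  qed simp
  finally show "ennreal (LINT y:{-1<..<1}|lborel. (cmod (f y))\<^sup>2)
         \<le> ennreal 3 * (\<integral>\<^sup>+\<omega>\<in>{0<..}.
              ennreal (\<omega>\<^sup>2 * ((cmod (wave_field f (-1) \<omega>))\<^sup>2
                              + (cmod (wave_field f 1 \<omega>))\<^sup>2)) \<partial>lborel)"
    unfolding lhs rhs .
qed


end
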